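(* Let $\mathcal{G}\subset\mathcal{S}$ with harmonic analogue $\mathcal{G}_H^0$. Suppose $p$ is a function of $n$ such that the Taylor coefficients $a_n(f)$ of every $f\in\mathcal{G}$ satisfy $|a_n(f)|\le p(n)$ for $n=2,3,\dots$. Then: (a) for every $f=h+\bar g\in\mathcal{G}_H^0$, the Taylor coefficients $A_n(f)$ of $h$ and $B_n(f)$ of $g$ satisfy $\big||A_n(f)|-|B_n(f)|\big|\le p(n)$ for $n=2,3,\dots$; (b) if $h_0\in\mathcal{G}$ has Taylor coefficients with $|a_n(h_0)|=p(n)$ for all $n=2,3,\dots$, then for an analytic function $g_0$ in $\mathbb{D}$, the harmonic function $f_0=h_0+\bar g_0$ belongs to $\mathcal{G}_H^0$ if and only if $g_0\equiv0$.
   Context: $\mathbb{D}$ is the open unit disk. $\mathcal{S}$ is the class of analytic univalent functions $f$ in $\mathbb{D}$ with $f(0)=0$, $f'(0)=1$. For $\mathcal{G}\subset\mathcal{S}$, its harmonic analogue $\mathcal{G}_H^0$ is the class of harmonic functions $f=h+\bar g$ ($h,g$ analytic in $\mathbb{D}$) such that $h+\epsilon g\in\mathcal{G}$ for every $\epsilon\in\mathbb{C}$ with $|\epsilon|=1$. *)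

theory Defs
  imports "HOL-Complex_Analysis.Complex_Analysis"
begin

definition classS :: "(complex \<Rightarrow> complex) set" where
  "classS = {f. f analytic_on ball 0 1 \<and> inj_on f (ball 0 1) \<and> f 0 = 0 \<and> deriv f 0 = 1}"

definition taylor_coeff :: "(complex \<Rightarrow> complex) \<Rightarrow> nat \<Rightarrow> complex" where
  "taylor_coeff f n = (deriv ^^ n) f 0 / of_nat (fact n)"

text \<open>Harmonic analogue G_H^0 of a class G: pairs (h,g) of analytic functions on the disk,
  representing f = h + conj g, such that h + eps*g belongs to G (as a function on the disk)
  for every unimodular eps.\<close>
definition harmonic_analogue :: "(complex \<Rightarrow> complex) set \<Rightarrow> ((complex \<Rightarrow> complex) \<times> (complex \<Rightarrow> complex)) set" where
  "harmonic_analogue G = {(h, g). h analytic_on ball 0 1 \<and> g analytic_on ball 0 1 \<and>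
     (\<forall>\<epsilon>::complex. norm \<epsilon> = 1 \<longrightarrow> (\<exists>F\<in>G. \<forall>z\<in>ball 0 1. F z = h z + \<epsilon> * g z))}"

end

theory Submission
  imports Defs
begin

lemma coef_lin:
  assumes h: "h analytic_on ball 0 1" and g: "g analytic_on ball 0 1"
    and F: "F analytic_on ball 0 1" and eq: "\<forall>z\<in>ball 0 1. F z = h z + e * g z"
  shows "(deriv ^^ n) F 0 = (deriv ^^ n) h 0 + e * (deriv ^^ n) g 0"
proof -
  have hh: "h holomorphic_on ball 0 1" and gh: "g holomorphic_on ball 0 1"
    and Fh: "F holomorphic_on ball 0 1"
    using h g F by (auto simp: analytic_on_open)
  have eh: "(\<lambda>w. e * g w) holomorphic_on ball 0 1"
    using gh by (intro holomorphic_intros)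
  have "(deriv ^^ n) F 0 = (deriv ^^ n) (\<lambda>w. h w + e * g w) 0"
    by (rule higher_deriv_transform_within_open[OF Fh holomorphic_on_add[OF hh eh]])
       (use eq in auto)
  also have "\<dots> = (deriv ^^ n) h 0 + (deriv ^^ n) (\<lambda>w. e * g w) 0"
    by (rule higher_deriv_add[OF hh eh]) auto
  also have "(deriv ^^ n) (\<lambda>w. e * g w) 0 = e * (deriv ^^ n) g 0"
    by (rule higher_deriv_cmult[OF gh]) auto
  finally show ?thesis .
qed

lemma aligned:
  fixes a b :: complex
  assumes "\<forall>e. norm e = 1 \<longrightarrow> norm (a + e * b) \<le> P"
  shows "norm a + norm b \<le> P"
proof (cases "a = 0 \<or> b = 0")
  case True
  then show ?thesis using assms[rule_format, of 1] by auto
next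
  case False
  define e where "e = (a / norm a) * (cnj b / norm b)"
  have ne: "norm e = 1" using False
    by (simp add: e_def norm_mult norm_divide)
  have cb: "cnj b * b = (complex_of_real (norm b))^2"
    using complex_norm_square[of b] by (simp add: mult.commute)
  have "e * b = (a / norm a) * (cnj b * b) / norm b"
    by (simp add: e_def)
  also have "\<dots> = a * (norm b / norm a)" using False
    unfolding cb by (simp add: power2_eq_square field_simps)
  finally have "e * b = a * (norm b / norm a)" .
  then have "a + e * b = a * (1 + complex_of_real (norm b / norm a))" by (simp add: algebra_simps)
  moreover have "norm (1 + complex_of_real (norm b / norm a)) = 1 + norm b / norm a"
    by (metis norm_of_real of_real_1 of_real_add abs_of_nonneg norm_ge_zero divide_nonneg_nonneg add_nonneg_nonneg zero_le_one)
  ultimately have "norm (a + e * b) = norm a * (1 + norm b / norm a)"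
    by (simp add: norm_mult)
  also have "\<dots> = norm a + norm b" using False by (simp add: field_simps)
  finally have "norm (a + e * b) = norm a + norm b" .
  then show ?thesis using assms ne by metis
qed

theorem theorem2p5:
  fixes G :: "(complex \<Rightarrow> complex) set" and p :: "nat \<Rightarrow> real"
  assumes "G \<subseteq> classS"
    and "\<forall>f\<in>G. \<forall>n\<ge>2. norm (taylor_coeff f n) \<le> p n"
  shows "(\<forall>h g. (h, g) \<in> harmonic_analogue G \<longrightarrow>
            (\<forall>n\<ge>2. \<bar>norm (taylor_coeff h n) - norm (taylor_coeff g n)\<bar> \<le> p n))
       \<and> (\<forall>h0 g0. h0 \<in> G \<and> (\<forall>n\<ge>2. norm (taylor_coeff h0 n) = p n) \<and> g0 analytic_on ball 0 1 \<longrightarrow>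
            ((h0, g0) \<in> harmonic_analogue G \<longleftrightarrow> (\<forall>z\<in>ball 0 1. g0 z = 0)))"
proof -
  have key: "(deriv ^^ n) h 0 + e * (deriv ^^ n) g 0 = (deriv ^^ n) F 0
             \<and> F \<in> classS"
    if hg: "(h, g) \<in> harmonic_analogue G" and F: "F \<in> G"
      and eq: "\<forall>z\<in>ball 0 1. F z = h z + e * g z" for h g F e n
  proof -
    have "F \<in> classS" using F assms(1) by auto
    then have "F analytic_on ball 0 1" by (simp add: classS_def)
    with coef_lin[of h g F e n] hg eq show ?thesis using \<open>F \<in> classS\<close>
      by (simp add: harmonic_analogue_def)
  qed
  have bnd: "norm (taylor_coeff h n) + norm (taylor_coeff g n) \<le> p n"
    if hg: "(h, g) \<in> harmonic_analogue G" and n: "n \<ge> 2" for h g n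
  proof (rule aligned, intro allI impI)
    fix e :: complex assume ne: "norm e = 1"
    from hg ne obtain F where F: "F \<in> G" and eq: "\<forall>z\<in>ball 0 1. F z = h z + e * g z"
      by (auto simp: harmonic_analogue_def)
    have "taylor_coeff h n + e * taylor_coeff g n = taylor_coeff F n"
      using arg_cong[where f="\<lambda>x. x / fact n", OF conjunct1[OF key[OF hg F eq, of n]]]
      by (simp add: taylor_coeff_def add_divide_distrib)
    then show "norm (taylor_coeff h n + e * taylor_coeff g n) \<le> p n"
      using assms(2) F n by auto
  qed
  show ?thesis
  proof (intro conjI allI impI)
    fix h g and n :: nat assume "(h, g) \<in> harmonic_analogue G" "2 \<le> n"
    from bnd[OF this] show "\<bar>norm (taylor_coeff h n) - norm (taylor_coeff g n)\<bar> \<le> p n"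
      unfolding abs_le_iff using norm_ge_zero[of "taylor_coeff h n"] norm_ge_zero[of "taylor_coeff g n"]
      by linarith
  next
    fix h0 g0
    assume A: "h0 \<in> G \<and> (\<forall>n\<ge>2. norm (taylor_coeff h0 n) = p n) \<and> g0 analytic_on ball 0 1"
    then have h0S: "h0 \<in> classS" using assms(1) by auto
    then have h0a: "h0 analytic_on ball 0 1" by (simp add: classS_def)
    show "(h0, g0) \<in> harmonic_analogue G \<longleftrightarrow> (\<forall>z\<in>ball 0 1. g0 z = 0)"
    proof
      assume hg: "(h0, g0) \<in> harmonic_analogue G"
      have hgall: "\<forall>\<epsilon>::complex. norm \<epsilon> = 1 \<longrightarrow> (\<exists>F\<in>G. \<forall>z\<in>ball 0 1. F z = h0 z + \<epsilon> * g0 z)"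
        using hg by (simp add: harmonic_analogue_def)
      obtain F1 where F1: "F1 \<in> G" "\<forall>z\<in>ball 0 1. F1 z = h0 z + 1 * g0 z"
        using hgall[rule_format, of 1] by auto
      obtain F2 where F2: "F2 \<in> G" "\<forall>z\<in>ball 0 1. F2 z = h0 z + (-1) * g0 z"
        using hgall[rule_format, of "-1"] by auto
      have d: "(deriv ^^ n) g0 0 = 0" for n
      proof (cases "n \<ge> 2")
        case True
        have "norm (taylor_coeff h0 n) + norm (taylor_coeff g0 n) \<le> p n" by (rule bnd[OF hg True])
        then have "taylor_coeff g0 n = 0" using A True by auto
        then show ?thesis by (simp add: taylor_coeff_def)
      next
        case False
        have k1: "(deriv ^^ n) h0 0 + (deriv ^^ n) g0 0 = (deriv ^^ n) F1 0" "F1 \<in> classS"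
          using key[OF hg F1(1), of 1 n] F1(2) by auto
        have k2: "(deriv ^^ n) h0 0 - (deriv ^^ n) g0 0 = (deriv ^^ n) F2 0" "F2 \<in> classS"
          using key[OF hg F2(1), of "-1" n] F2(2) by auto
        have "n = 0 \<or> n = 1" using False by auto
        then have "(deriv ^^ n) F1 0 = (deriv ^^ n) h0 0 \<and> (deriv ^^ n) F2 0 = (deriv ^^ n) h0 0"
          using k1(2) k2(2) h0S by (auto simp: classS_def)
        then show ?thesis using k1(1) k2(1) by auto
      qed
      show "\<forall>z\<in>ball 0 1. g0 z = 0"
      proof
        fix z :: complex assume z: "z \<in> ball 0 1"
        have "g0 holomorphic_on ball 0 1" using A by (simp add: analytic_on_open)
        then show "g0 z = 0"
          by (rule holomorphic_fun_eq_0_on_connected[of g0 "ball 0 1" 0 z]) (use d z in auto)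
      qed
    next
      assume z: "\<forall>z\<in>ball 0 1. g0 z = 0"
      show "(h0, g0) \<in> harmonic_analogue G"
        unfolding harmonic_analogue_def using A h0a z by auto
    qed
  qed
qed

end
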